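(* Let $X,Y\in\mathcal{P}$ be partitions of a dataset $\mathcal{Z}$ with $m$ elements. The matrix $\mathbf{C}(X,Y)=(m_{pq})_{p,q\in\{0,1\}}$ satisfies: (1) if $X,Y\in\mathcal{P}^+$, then $\mathbf{C}^+(X,Y)=\mathbf{C}(X,Y)$; (2) $m_{pq}\ge0$ for all $p,q\in\{0,1\}$; (3) $\sum_{p,q}m_{pq}=N$, where $N=m(m-1)/2$.
   Context: Let $\mathcal{Z}=\{z_1,\dots,z_m\}$, $1\le\ell\le m$, $\mathcal{X} = \{\mathbf{X}\in[0,1]^{\ell\times m} : \mathbf{X}^T\mathbf{1}_\ell = \mathbf{1}_m\}$, and let $\mathcal{P}=\mathcal{X}/\Pi$ be the set of orbits $X=\{\mathbf{P}\mathbf{X}:\mathbf{P}$ an $\ell\times\ell$ permutation matrix$\}$ (partitions); entry $x_{kj}$ is the membership of $z_j$ in cluster $k$. $\mathcal{P}^+$ is the set of hard partitions, those represented by matrices in $\{0,1\}^{\ell\times m}$; a hard partition $X$ induces the relation $z\sim_X z'$ iff $z,z'$ lie in the same cluster. For hard $X,Y$, $\mathbf{C}^+(X,Y)=(m^+_{pq})$ is the $2\times2$ matrix where $m^+_{11}$, $m^+_{10}$, $m^+_{01}$, $m^+_{00}$ count the 2-element subsets $\{z,z'\}\subseteq\mathcal{Z}$ with, respectively, ($z\sim_Xz'$, $z\sim_Yz'$), ($z\sim_Xz'$, $z\not\sim_Yz'$), ($z\not\sim_Xz'$, $z\sim_Yz'$), ($z\not\sim_Xz'$, $z\not\sim_Yz'$).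 For any $X\in\mathcal{P}$ the compatibility matrix is $\mathbf{C}_X=\mathbf{X}^T\mathbf{X}$ for any representative $\mathbf{X}\in X$. For $m\times m$ matrices $\mathbf{A}=(a_{rs}),\mathbf{B}=(b_{rs})$ let $\chi(\mathbf{A},\mathbf{B})=\sum_{r=1}^m\sum_{s=r+1}^m a_{rs}b_{rs}$, and let $\mathbf{1}$ be the $m\times m$ all-ones matrix. Define $\mathbf{C}(X,Y)=(m_{pq})$ by $m_{11}=\chi(\mathbf{C}_X,\mathbf{C}_Y)$, $m_{10}=\chi(\mathbf{C}_X,\mathbf{1}-\mathbf{C}_Y)$, $m_{01}=\chi(\mathbf{1}-\mathbf{C}_X,\mathbf{C}_Y)$, $m_{00}=\chi(\mathbf{1}-\mathbf{C}_X,\mathbf{1}-\mathbf{C}_Y)$. *)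

theory Defs
  imports Complex_Main
begin

text \<open>Dataset Z = {z_0,...,z_(m-1)} is identified with the index set {0..<m}.
An l x m matrix is a function nat => nat => real, entry X k j = membership of z_j
in cluster k (k < l, j < m).  A partition (orbit under row permutations) is
handled through an arbitrary representative matrix; all notions below are
invariant under row permutation.\<close>

definition partition_matrix :: "nat \<Rightarrow> nat \<Rightarrow> (nat \<Rightarrow> nat \<Rightarrow> real) \<Rightarrow> bool" where
  "partition_matrix l m X \<longleftrightarrow>
     (\<forall>k<l. \<forall>j<m. 0 \<le> X k j \<and> X k j \<le> 1) \<and> (\<forall>j<m. (\<Sum>k<l. X k j) = 1)"

definition hard_partition_matrix :: "nat \<Rightarrow> nat \<Rightarrow> (nat \<Rightarrow> nat \<Rightarrow> real) \<Rightarrow> bool" where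
  "hard_partition_matrix l m X \<longleftrightarrow>
     partition_matrix l m X \<and> (\<forall>k<l. \<forall>j<m. X k j = 0 \<or> X k j = 1)"

definition same_cluster :: "nat \<Rightarrow> (nat \<Rightarrow> nat \<Rightarrow> real) \<Rightarrow> nat \<Rightarrow> nat \<Rightarrow> bool" where
  "same_cluster l X z z' \<longleftrightarrow> (\<exists>k<l. X k z = 1 \<and> X k z' = 1)"

definition compat :: "nat \<Rightarrow> (nat \<Rightarrow> nat \<Rightarrow> real) \<Rightarrow> nat \<Rightarrow> nat \<Rightarrow> real" where
  "compat l X r s = (\<Sum>k<l. X k r * X k s)"

definition chi :: "nat \<Rightarrow> (nat \<Rightarrow> nat \<Rightarrow> real) \<Rightarrow> (nat \<Rightarrow> nat \<Rightarrow> real) \<Rightarrow> real" where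
  "chi m A B = (\<Sum>r<m. \<Sum>s\<in>{r+1..<m}. A r s * B r s)"

text \<open>Index p = True stands for 1, p = False for 0.
 C(X,Y)_pq = chi(C_X or 1 - C_X, C_Y or 1 - C_Y).\<close>
definition Cmat :: "nat \<Rightarrow> nat \<Rightarrow> (nat \<Rightarrow> nat \<Rightarrow> real) \<Rightarrow> (nat \<Rightarrow> nat \<Rightarrow> real)
                     \<Rightarrow> bool \<Rightarrow> bool \<Rightarrow> real" where
  "Cmat l m X Y p q =
     chi m (\<lambda>r s. if p then compat l X r s else 1 - compat l X r s)
           (\<lambda>r s. if q then compat l Y r s else 1 - compat l Y r s)"

definition Cplus :: "nat \<Rightarrow> nat \<Rightarrow> (nat \<Rightarrow> nat \<Rightarrow> real) \<Rightarrow> (nat \<Rightarrow> nat \<Rightarrow> real)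
                     \<Rightarrow> bool \<Rightarrow> bool \<Rightarrow> nat" where
  "Cplus l m X Y p q =
     card {P. \<exists>z z'. P = {z, z'} \<and> z < m \<and> z' < m \<and> z \<noteq> z'
                  \<and> same_cluster l X z z' = p \<and> same_cluster l Y z z' = q}"

end

theory Submission
  imports Defs
begin

lemma compat_bounds:
  assumes "partition_matrix l m X" "r < m" "s < m"
  shows "0 \<le> compat l X r s \<and> compat l X r s \<le> 1"
proof -
  have b: "\<And>k. k < l \<Longrightarrow> 0 \<le> X k r \<and> X k r \<le> 1 \<and> 0 \<le> X k s \<and> X k s \<le> 1"
    using assms unfolding partition_matrix_def by auto
  have "compat l X r s \<le> (\<Sum>k<l. X k r)"
    unfolding compat_def
  proof (rule sum_mono)
    fix k assume "k \<in> {..<l}"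
    with b[of k] show "X k r * X k s \<le> X k r"
      by (simp add: mult_left_le)
  qed
  also have "\<dots> = 1" using assms unfolding partition_matrix_def by auto
  finally have "compat l X r s \<le> 1" .
  moreover have "0 \<le> compat l X r s" unfolding compat_def
    using b by (auto intro!: sum_nonneg)
  ultimately show ?thesis by simp
qed

lemma compat_hard:
  assumes "hard_partition_matrix l m X" "r < m" "s < m"
  shows "compat l X r s = (if same_cluster l X r s then 1 else 0)"
proof -
  have pm: "partition_matrix l m X" using assms unfolding hard_partition_matrix_def by auto
  have h: "\<And>k. k < l \<Longrightarrow> (X k r = 0 \<or> X k r = 1) \<and> (X k s = 0 \<or> X k s = 1)"
    using assms unfolding hard_partition_matrix_def by auto
  note bd = compat_bounds[OF pm assms(2,3)]
  show ?thesis
  proof (cases "same_cluster l X r s")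
    case True
    then obtain k where k: "k < l" "X k r = 1" "X k s = 1" unfolding same_cluster_def by auto
    have "X k r * X k s \<le> compat l X r s" unfolding compat_def
      using k pm assms(2,3) unfolding partition_matrix_def
      by (intro member_le_sum) (auto intro!: mult_nonneg_nonneg)
    with k bd True show ?thesis by simp
  next
    case False
    have "\<And>k. k < l \<Longrightarrow> X k r * X k s = 0"
      using h False unfolding same_cluster_def by force
    hence "compat l X r s = 0" unfolding compat_def by (intro sum.neutral) auto
    with False show ?thesis by simp
  qed
qed

lemma same_cluster_sym: "same_cluster l X a b = same_cluster l X b a"
  unfolding same_cluster_def by auto

lemma chi_ones: "chi m (\<lambda>r s. 1) (\<lambda>r s. 1) = real m * (real m - 1) / 2"
proof (induction m)
  case 0 show ?case by (simp add: chi_def)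
next
  case (Suc n)
  have "chi (Suc n) (\<lambda>r s. 1) (\<lambda>r s. 1) = (\<Sum>r<Suc n. real (Suc n - (r+1)))"
    by (simp add: chi_def)
  also have "\<dots> = (\<Sum>r<n. real (n - (r+1))) + (\<Sum>r<n. 1) + 0"
  proof -
    have "(\<Sum>r<Suc n. real (Suc n - (r+1))) = (\<Sum>r<n. real (Suc n - (r+1)))" by simp
    also have "\<dots> = (\<Sum>r<n. real (n - (r+1)) + 1)"
      by (intro sum.cong refl) (simp add: Suc_diff_Suc of_nat_diff)
    also have "\<dots> = (\<Sum>r<n. real (n - (r+1))) + (\<Sum>r<n. 1)"
      by (rule sum.distrib)
    finally show ?thesis by simp
  qed
  also have "(\<Sum>r<n. real (n - (r+1))) = chi n (\<lambda>r s. 1) (\<lambda>r s. 1)"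
    by (simp add: chi_def)
  finally show ?case using Suc by (simp add: field_simps)
qed

theorem proposition1:
  fixes l m :: nat and X Y :: "nat \<Rightarrow> nat \<Rightarrow> real"
  assumes "1 \<le> l" and "l \<le> m"
    and "partition_matrix l m X" and "partition_matrix l m Y"
  shows "((hard_partition_matrix l m X \<and> hard_partition_matrix l m Y) \<longrightarrow>
            (\<forall>p q. real (Cplus l m X Y p q) = Cmat l m X Y p q))
       \<and> (\<forall>p q. Cmat l m X Y p q \<ge> 0)
       \<and> (\<Sum>p\<in>{True, False}. \<Sum>q\<in>{True, False}. Cmat l m X Y p q) = real m * (real m - 1) / 2"
proof (intro conjI impI allI)
  fix p q
  show "Cmat l m X Y p q \<ge> 0"
    unfolding Cmat_def chi_def
    using compat_bounds[OF assms(3)] compat_bounds[OF assms(4)]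
    by (intro sum_nonneg mult_nonneg_nonneg) auto
next
  have "(\<Sum>p\<in>{True, False}. \<Sum>q\<in>{True, False}. Cmat l m X Y p q) = chi m (\<lambda>r s. 1) (\<lambda>r s. 1)"
    unfolding Cmat_def chi_def
    by (simp add: sum.distrib[symmetric] algebra_simps)
  thus "(\<Sum>p\<in>{True, False}. \<Sum>q\<in>{True, False}. Cmat l m X Y p q) = real m * (real m - 1) / 2"
    using chi_ones by simp
next
  fix p q
  assume H: "hard_partition_matrix l m X \<and> hard_partition_matrix l m Y"
  define P where "P r s \<longleftrightarrow> same_cluster l X r s = p \<and> same_cluster l Y r s = q" for r s
  define S where "S = Sigma {..<m} (\<lambda>r. {s\<in>{r+1..<m}. P r s})"
  have Psym: "P a b = P b a" for a b unfolding P_def using same_cluster_sym by metis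
  have eqset: "{Q. \<exists>z z'. Q = {z, z'} \<and> z < m \<and> z' < m \<and> z \<noteq> z'
                  \<and> same_cluster l X z z' = p \<and> same_cluster l Y z z' = q}
        = (\<lambda>(r,s). {r,s}) ` S"
  proof (intro equalityI subsetI)
    fix Q assume "Q \<in> {Q. \<exists>z z'. Q = {z, z'} \<and> z < m \<and> z' < m \<and> z \<noteq> z'
                  \<and> same_cluster l X z z' = p \<and> same_cluster l Y z z' = q}"
    then obtain z z' where zz: "Q = {z,z'}" "z < m" "z' < m" "z \<noteq> z'" "P z z'"
      unfolding P_def by auto
    show "Q \<in> (\<lambda>(r,s). {r,s}) ` S"
    proof (cases "z < z'")
      case True
      hence "(z,z') \<in> S" using zz unfolding S_def by auto
      thus ?thesis using zz by force
    next
      case False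
      hence "(z',z) \<in> S" using zz Psym unfolding S_def by auto
      thus ?thesis using zz by (force simp: insert_commute)
    qed
  next
    fix Q assume "Q \<in> (\<lambda>(r,s). {r,s}) ` S"
    then obtain r s where "Q = {r,s}" "(r,s) \<in> S" by auto
    hence "Q = {r,s} \<and> r < m \<and> s < m \<and> r \<noteq> s \<and> same_cluster l X r s = p \<and> same_cluster l Y r s = q"
      unfolding S_def P_def by auto
    thus "Q \<in> {Q. \<exists>z z'. Q = {z, z'} \<and> z < m \<and> z' < m \<and> z \<noteq> z'
                  \<and> same_cluster l X z z' = p \<and> same_cluster l Y z z' = q}"
      by blast
  qed
  have inj: "inj_on (\<lambda>(r,s). {r,s}) S"
    unfolding inj_on_def S_def by (auto simp: doubleton_eq_iff)
  have "Cplus l m X Y p q = card S"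
    unfolding Cplus_def eqset using card_image[OF inj] by simp
  also have "card S = (\<Sum>r<m. card {s\<in>{r+1..<m}. P r s})"
    unfolding S_def by (simp add: card_SigmaI)
  finally have c: "real (Cplus l m X Y p q) = (\<Sum>r<m. real (card {s\<in>{r+1..<m}. P r s}))"
    by simp
  have "Cmat l m X Y p q = (\<Sum>r<m. \<Sum>s\<in>{r+1..<m}. if P r s then 1 else 0)"
    unfolding Cmat_def chi_def
  proof (intro sum.cong refl)
    fix r s assume "r \<in> {..<m}" "s \<in> {r+1..<m}"
    hence "r < m" "s < m" by auto
    thus "(if p then compat l X r s else 1 - compat l X r s) *
          (if q then compat l Y r s else 1 - compat l Y r s) = (if P r s then 1 else 0)"
      using compat_hard[of l m X r s] compat_hard[of l m Y r s] H unfolding P_def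
      by auto
  qed
  also have "\<dots> = (\<Sum>r<m. real (card {s\<in>{r+1..<m}. P r s}))"
    by (intro sum.cong refl) (simp add: sum.If_cases Int_def)
  finally show "real (Cplus l m X Y p q) = Cmat l m X Y p q" using c by simp
qed

end
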